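(* Let $k_1<k_2$ be integers with $k_1\ge 3$, and let $n$ be a positive integer. If $\nu_{k_1}(n+k_1-3)>0$, then $\nu_{k_2}(n+k_2-3)>0$.
   Context: For an integer $k\ge 3$ and a positive integer $m$, $\nu_k(m)$ denotes the number of $k$-tuples of integers $(x_1,\dots,x_k)$ with $1\le x_1\le x_2\le\dots\le x_k$ such that $x_1x_2\cdots x_k+x_1+x_2+\dots+x_k=m$. *)

theory Defs
  imports Main
begin

definition nu :: "nat \<Rightarrow> int \<Rightarrow> nat" where
  "nu k m = card {xs :: int list. length xs = k \<and> sorted xs \<and> (\<forall>x\<in>set xs. 1 \<le> x)
                 \<and> prod_list xs + sum_list xs = m}"

end

theory Submission
  imports Defs
begin

lemma prod_ge1: "\<forall>x\<in>set xs. (1::int) \<le> x \<Longrightarrow> 1 \<le> prod_list xs"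
proof (induction xs)
  case (Cons a xs)
  then have "1 \<le> a" "1 \<le> prod_list xs" by auto
  then show ?case using mult_mono[of 1 a 1 "prod_list xs"] by simp
qed simp

lemma sum_ge: "\<forall>x\<in>set xs. (1::int) \<le> x \<Longrightarrow> y \<in> set xs \<Longrightarrow> y \<le> sum_list xs"
  by (rule Groups_List.member_le_sum_list) auto

lemma fin_nu: "finite {xs :: int list. length xs = k \<and> sorted xs \<and> (\<forall>x\<in>set xs. 1 \<le> x)
                 \<and> prod_list xs + sum_list xs = m}" (is "finite ?S")
proof -
  have "?S \<subseteq> {xs. set xs \<subseteq> {1..m} \<and> length xs = k}"
  proof
    fix xs assume xs: "xs \<in> ?S"
    have p: "prod_list xs \<ge> 0" using xs prod_ge1[of xs] by simp
    have "\<forall>x\<in>set xs. x \<le> sum_list xs"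
      using xs sum_ge[of xs] by simp
    moreover have "prod_list xs + sum_list xs = m" "length xs = k" "\<forall>x\<in>set xs. 1 \<le> x"
      using xs by simp_all
    ultimately have "set xs \<subseteq> {1..m}" using p by fastforce
    then show "xs \<in> {xs. set xs \<subseteq> {1..m} \<and> length xs = k}" using \<open>length xs = k\<close> by simp
  qed
  moreover have "finite {xs. set xs \<subseteq> {1..m} \<and> length xs = k}"
    by (rule finite_lists_length_eq) simp
  ultimately show ?thesis by (rule finite_subset)
qed

theorem corollary1:
  fixes k1 k2 :: nat and n :: int
  assumes "3 \<le> k1" and "k1 < k2" and "0 < n"
    and "nu k1 (n + int k1 - 3) > 0"
  shows "nu k2 (n + int k2 - 3) > 0"
proof -
  let ?S1 = "{xs :: int list. length xs = k1 \<and> sorted xs \<and> (\<forall>x\<in>set xs. 1 \<le> x)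
                 \<and> prod_list xs + sum_list xs = n + int k1 - 3}"
  let ?S2 = "{xs :: int list. length xs = k2 \<and> sorted xs \<and> (\<forall>x\<in>set xs. 1 \<le> x)
                 \<and> prod_list xs + sum_list xs = n + int k2 - 3}"
  have "card ?S1 > 0" using assms(4) unfolding nu_def .
  then have "?S1 \<noteq> {}" by (rule card_gt_0_iff[THEN iffD1, THEN conjunct1])
  then obtain xs where "xs \<in> ?S1" by blast
  then have xs: "length xs = k1" "sorted xs" "\<forall>x\<in>set xs. 1 \<le> x"
    "prod_list xs + sum_list xs = n + int k1 - 3" by simp_all
  define ys where "ys = replicate (k2 - k1) (1::int) @ xs"
  have "length ys = k2" using xs assms(2) by (simp add: ys_def)
  moreover have "sorted ys" using xs unfolding ys_def sorted_append by simp
  moreover have "\<forall>x\<in>set ys. 1 \<le> x" using xs unfolding ys_def by (auto simp: in_set_replicate)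
  moreover have "prod_list ys + sum_list ys = n + int k2 - 3"
  proof -
    have "prod_list ys = prod_list xs" by (simp add: ys_def)
    moreover have "sum_list ys = int (k2 - k1) + sum_list xs" unfolding ys_def sum_list_append sum_list_replicate by simp
    moreover have "int (k2 - k1) = int k2 - int k1" using assms(2) by simp
    ultimately show ?thesis using xs(4) by simp
  qed
  ultimately have "ys \<in> ?S2" by (simp only: mem_Collect_eq)
  then have "?S2 \<noteq> {}" by (metis empty_iff)
  then have "card ?S2 > 0" using fin_nu[of k2 "n + int k2 - 3"] by (simp only: card_gt_0_iff) simp
  then show ?thesis unfolding nu_def .
qed

end
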